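(* Let $X\subseteq\mathbb R^n$ be nonempty, closed and convex, $F(x)=\mathsf E[\Phi(x,\xi)]$, with $F$ single-valued, Lipschitz continuous on $X$ with constant $L>0$ and strongly monotone on $X$ with constant $\eta>0$. Consider $x_{k+1}=\Pi_X(x_k-\gamma_k(F(x_k)+w_k))$, $w_k=\Phi(x_k,\xi_k)-F(x_k)$, $k\ge0$, where $x_0\in X$ is random, independent of the samples, with $\mathsf E\|x_0\|^2<\infty$; with $\mathcal F_k=\{x_0,\xi_0,\dots,\xi_{k-1}\}$, assume $\mathsf E[w_k\mid\mathcal F_k]=0$ and $\mathsf E[\|w_k\|^2\mid\mathcal F_k]\le\nu^2$ a.s. for all $k$, for a deterministic $\nu>0$. Let $c>0$, $0<\gamma_0<\frac1c$, and $\gamma_k=\gamma_{k-1}(1-c\gamma_{k-1})$ for $k\ge1$. Then $\{x_k\}$ converges almost surely to a random point belonging to the solution set of VI$(X,F)$ (which consists of its unique solution).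
   Context: VI$(X,F)$ asks for $x^*\in X$ with $(x-x^* )^TF(x^* )\ge0$ for all $x\in X$; $\Pi_X$ is the Euclidean projection onto $X$. Strong monotonicity: $(F(x)-F(y))^T(x-y)\ge\eta\|x-y\|^2$ for all $x,y\in X$. *)

theory Defs
  imports "HOL-Probability.Probability"
begin

definition VI_sol :: "('n::euclidean_space) set \<Rightarrow> ('n \<Rightarrow> 'n) \<Rightarrow> 'n set" where
  "VI_sol X F = {xs \<in> X. \<forall>x\<in>X. inner (x - xs) (F xs) \<ge> 0}"

definition nat_filt ::
  "'a measure \<Rightarrow> 'b measure \<Rightarrow> ('a \<Rightarrow> 'c::topological_space) \<Rightarrow> (nat \<Rightarrow> 'a \<Rightarrow> 'b) \<Rightarrow> nat \<Rightarrow> 'a measure" where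
  "nat_filt M S x0 xi k = sigma (space M)
     ({x0 -` A \<inter> space M | A. A \<in> sets borel} \<union>
      (\<Union>j<k. {xi j -` A \<inter> space M | A. A \<in> sets S}))"

end

theory Submission
  imports Defs
begin


lemma gamma_basic:
  fixes \<gamma> :: "nat \<Rightarrow> real" and c :: real
  assumes c: "c > 0" and g0: "0 < \<gamma> 0" "\<gamma> 0 < 1 / c"
    and gS: "\<And>k. \<gamma> (Suc k) = \<gamma> k * (1 - c * \<gamma> k)"
  shows "0 < \<gamma> k \<and> \<gamma> k \<le> \<gamma> 0"
proof (induction k)
  case 0 then show ?case using g0 by simp
next
  case (Suc k)
  have "c * \<gamma> k \<le> c * \<gamma> 0" using Suc c by simp
  also have "\<dots> < 1" using g0 c by (simp add: field_simps)
  finally have a: "c * \<gamma> k < 1" .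
  have b: "c * \<gamma> k > 0" using Suc c by simp
  have "\<gamma> (Suc k) > 0" using gS[of k] Suc a by simp
  moreover have "\<gamma> (Suc k) \<le> \<gamma> k" using gS[of k] Suc b
    by (simp add: mult_le_cancel_left1)
  ultimately show ?case using Suc by simp
qed

lemma gamma_props:
  fixes \<gamma> :: "nat \<Rightarrow> real" and c :: real
  assumes c: "c > 0" and g0: "0 < \<gamma> 0" "\<gamma> 0 < 1 / c"
    and gS: "\<And>k. \<gamma> (Suc k) = \<gamma> k * (1 - c * \<gamma> k)"
  shows "\<And>k. \<gamma> k > 0" "\<gamma> \<longlonglongrightarrow> 0" "\<And>B. \<exists>n. B < (\<Sum>i<n. \<gamma> i)"
proof -
  note gb = gamma_basic[OF c g0 gS]
  show pos: "\<And>k. \<gamma> k > 0" using gb by blast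
  have ct: "c * \<gamma> k < 1" for k
  proof -
    have "c * \<gamma> k \<le> c * \<gamma> 0" using gb[of k] c by simp
    also have "\<dots> < 1" using g0 c by (simp add: field_simps)
    finally show ?thesis .
  qed
  have ct0: "c * \<gamma> 0 < 1" using ct by blast
  have inv_eq: "1 / \<gamma> (Suc k) = 1 / \<gamma> k + c / (1 - c * \<gamma> k)" for k
  proof -
    have "\<gamma> k > 0" "1 - c * \<gamma> k > 0" using pos ct[of k] by auto
    then show ?thesis using gS[of k] by (simp add: field_simps)
  qed
  have inv_lo: "1 / \<gamma> k \<ge> c * real k" for k
  proof (induction k)
    case 0 then show ?case using pos[of 0] by simp
  next
    case (Suc k)
    have "c / (1 - c * \<gamma> k) \<ge> c"
    proof -
      have "0 < 1 - c * \<gamma> k" "1 - c * \<gamma> k \<le> 1" using ct[of k] pos[of k] c by auto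
      then show ?thesis using c by (simp add: field_simps)
    qed
    then show ?case using Suc inv_eq[of k] by (simp add: algebra_simps)
  qed
  define D where "D = c / (1 - c * \<gamma> 0)"
  have inv_hi: "1 / \<gamma> k \<le> 1 / \<gamma> 0 + D * real k" for k
  proof (induction k)
    case 0 then show ?case by simp
  next
    case (Suc k)
    have "c / (1 - c * \<gamma> k) \<le> D"
    proof -
      have "0 < 1 - c * \<gamma> 0" using ct0 by simp
      moreover have "1 - c * \<gamma> 0 \<le> 1 - c * \<gamma> k" using gb[of k] c by (simp add: mult_left_mono)
      ultimately show ?thesis unfolding D_def using c by (simp add: frac_le)
    qed
    then show ?case using Suc inv_eq[of k] by (simp add: algebra_simps)
  qed
  show "\<gamma> \<longlonglongrightarrow> 0"
  proof (rule LIMSEQ_I)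
    fix r :: real assume r: "0 < r"
    obtain N :: nat where N: "real N > 1 / (c * r)" using reals_Archimedean2 by blast
    have "\<forall>n\<ge>N. norm (\<gamma> n - 0) < r"
    proof (intro allI impI)
      fix n assume "N \<le> n"
      then have "real n > 1 / (c * r)" using N by linarith
      then have "c * real n > 1 / r" using c r by (simp add: field_simps)
      then have "1 / \<gamma> n > 1 / r" using inv_lo[of n] by linarith
      then have "\<gamma> n < r" using pos[of n] r by (auto simp: field_simps)
      then show "norm (\<gamma> n - 0) < r" using pos[of n] by simp
    qed
    then show "\<exists>no. \<forall>n\<ge>no. norm (\<gamma> n - 0) < r" by blast
  qed
  define E where "E = max (1 / \<gamma> 0) D"
  have Epos: "E > 0" unfolding E_def using pos[of 0] by (simp add: less_max_iff_disj)
  have glo: "\<gamma> k \<ge> 1 / (E * real (Suc k))" for k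
  proof -
    have D0: "D \<ge> 0" unfolding D_def using c ct0 by simp
    have "1 / \<gamma> k \<le> E + E * real k"
      using inv_hi[of k] D0 unfolding E_def
      by (smt (verit, del_insts) mult_right_mono of_nat_0_le_iff max.cobounded1 max.cobounded2)
    then have "1 / \<gamma> k \<le> E * real (Suc k)" by (simp add: algebra_simps)
    then show ?thesis using pos[of k] Epos
      by (metis divide_le_eq_1_pos le_divide_eq mult.commute of_nat_0_less_iff zero_less_Suc
          mult_pos_pos nonzero_divide_eq_eq one_divide_eq_0_iff mult_eq_0_iff)
  qed
  have nsum: "\<not> summable \<gamma>"
  proof
    assume "summable \<gamma>"
    then have "summable (\<lambda>k. E * \<gamma> k)" by (rule summable_mult)
    then have "summable (\<lambda>k. inverse (real (Suc k)))"
    proof (rule summable_comparison_test'[where N=0])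
      fix k :: nat
      have "inverse (real (Suc k)) = E * (1 / (E * real (Suc k)))" using Epos by (simp add: field_simps del: of_nat_Suc)
      also have "\<dots> \<le> E * \<gamma> k" by (intro mult_left_mono) (use glo[of k] Epos in auto)
      finally show "norm (inverse (real (Suc k))) \<le> E * \<gamma> k" by simp
    qed
    then have "summable (\<lambda>k. inverse (real k))" by (subst summable_Suc_iff[symmetric]) simp
    then show False using not_summable_harmonic[where 'a=real] by simp
  qed
  show "\<exists>n. B < (\<Sum>i<n. \<gamma> i)" for B
  proof (rule ccontr)
    assume "\<not> ?thesis"
    then have "\<And>n. (\<Sum>i<n. \<gamma> i) \<le> B" by (simp add: not_less)
    then have "summable \<gamma>" using pos by (intro summableI_nonneg_bounded[where x=B]) (auto simp: less_imp_le)
    then show False using nsum by simp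
  qed
qed



lemma u_to_zero:
  fixes u \<gamma> :: "nat \<Rightarrow> real" and \<eta> b :: real and K :: nat
  assumes u0: "\<And>k. u k \<ge> 0" and gpos: "\<And>k. \<gamma> k > 0" and glim: "\<gamma> \<longlonglongrightarrow> 0"
    and gdiv: "\<And>B. \<exists>n. B < (\<Sum>i<n. \<gamma> i)"
    and eta: "\<eta> > 0" and b: "b \<ge> 0"
    and rec: "\<And>k. k \<ge> K \<Longrightarrow> u (Suc k) \<le> (1 - \<eta> * \<gamma> k) * u k + b * (\<gamma> k)\<^sup>2"
  shows "u \<longlonglongrightarrow> 0"
proof (rule LIMSEQ_I)
  fix r :: real assume r: "0 < r"
  define \<epsilon> where "\<epsilon> = r / 4"
  have \<epsilon>: "\<epsilon> > 0" using r unfolding \<epsilon>_def by simp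
  have ev1: "\<forall>\<^sub>F k in sequentially. \<eta> * \<gamma> k \<le> 1"
  proof -
    have "\<forall>\<^sub>F k in sequentially. \<gamma> k < 1 / \<eta>" using glim eta by (intro order_tendstoD) auto
    then show ?thesis by eventually_elim (use eta in \<open>auto simp: field_simps\<close>)
  qed
  have ev2: "\<forall>\<^sub>F k in sequentially. b * \<gamma> k \<le> \<eta> * \<epsilon> / 2"
  proof -
    have "((\<lambda>k. b * \<gamma> k) \<longlongrightarrow> b * 0) sequentially" using glim by (intro tendsto_mult) auto
    then have "\<forall>\<^sub>F k in sequentially. b * \<gamma> k < \<eta> * \<epsilon> / 2" using eta \<epsilon> by (intro order_tendstoD) auto
    then show ?thesis by eventually_elim simp
  qed
  obtain N0 where N0: "\<And>k. k \<ge> N0 \<Longrightarrow> \<eta> * \<gamma> k \<le> 1 \<and> b * \<gamma> k \<le> \<eta> * \<epsilon> / 2"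
    using eventually_conj[OF ev1 ev2] unfolding eventually_sequentially by blast
  define N where "N = max N0 K"
  have stay: "u (Suc k) \<le> 2 * \<epsilon>" if "k \<ge> N" "u k \<le> 2 * \<epsilon>" for k
  proof -
    have k: "k \<ge> K" "k \<ge> N0" using that unfolding N_def by auto
    have h1: "\<eta> * \<gamma> k \<le> 1" "b * \<gamma> k \<le> \<eta> * \<epsilon> / 2" using N0[OF k(2)] by auto
    have "u (Suc k) \<le> (1 - \<eta> * \<gamma> k) * u k + b * (\<gamma> k)\<^sup>2" using rec k by blast
    also have "\<dots> \<le> (1 - \<eta> * \<gamma> k) * (2 * \<epsilon>) + (b * \<gamma> k) * \<gamma> k"
      using h1 that(2) by (intro add_mono mult_left_mono) (auto simp: power2_eq_square)
    also have "\<dots> \<le> (1 - \<eta> * \<gamma> k) * (2 * \<epsilon>) + (\<eta> * \<epsilon> / 2) * \<gamma> k"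
      using h1 gpos[of k] \<epsilon> by (intro add_mono mult_right_mono) auto
    also have "\<dots> \<le> 2 * \<epsilon>" using eta \<epsilon> gpos[of k] by (simp add: algebra_simps)
    finally show ?thesis .
  qed
  have dec: "u (Suc k) \<le> u k - \<eta> * \<epsilon> * \<gamma> k" if "k \<ge> N" "u k > 2 * \<epsilon>" for k
  proof -
    have k: "k \<ge> K" "k \<ge> N0" using that unfolding N_def by auto
    have h1: "\<eta> * \<gamma> k \<le> 1" "b * \<gamma> k \<le> \<eta> * \<epsilon> / 2" using N0[OF k(2)] by auto
    have "u (Suc k) \<le> (1 - \<eta> * \<gamma> k) * u k + b * (\<gamma> k)\<^sup>2" using rec k by blast
    also have "\<dots> = u k - \<gamma> k * (\<eta> * u k - b * \<gamma> k)" by (simp add: algebra_simps power2_eq_square)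
    also have "\<dots> \<le> u k - \<gamma> k * (\<eta> * (2 * \<epsilon>) - \<eta> * \<epsilon> / 2)"
    proof -
      have "\<eta> * (2 * \<epsilon>) \<le> \<eta> * u k" using that(2) eta by simp
      then have "\<eta> * (2 * \<epsilon>) - \<eta> * \<epsilon> / 2 \<le> \<eta> * u k - b * \<gamma> k" using h1 by linarith
      then show ?thesis using gpos[of k] by (simp add: mult_left_mono)
    qed
    also have "\<dots> \<le> u k - \<eta> * \<epsilon> * \<gamma> k" using eta \<epsilon> gpos[of k] by (simp add: algebra_simps)
    finally show ?thesis .
  qed
  have hit: "\<exists>m\<ge>N. u m \<le> 2 * \<epsilon>"
  proof (rule ccontr)
    assume "\<not> ?thesis"
    then have big: "\<And>m. m \<ge> N \<Longrightarrow> u m > 2 * \<epsilon>" using not_le by blast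
    have desc: "u (N + j) \<le> u N - \<eta> * \<epsilon> * (\<Sum>i<j. \<gamma> (N + i))" for j
    proof (induction j)
      case 0 then show ?case by simp
    next
      case (Suc j)
      have "u (Suc (N + j)) \<le> u (N + j) - \<eta> * \<epsilon> * \<gamma> (N + j)" using dec big[of "N+j"] by simp
      then show ?case using Suc by (simp add: algebra_simps)
    qed
    obtain n where n: "(\<Sum>i<N. \<gamma> i) + u N / (\<eta> * \<epsilon>) < (\<Sum>i<n. \<gamma> i)" using gdiv by blast
    have "n \<ge> N"
    proof (rule ccontr)
      assume "\<not> n \<ge> N"
      then have "(\<Sum>i<n. \<gamma> i) \<le> (\<Sum>i<N. \<gamma> i)" using gpos by (intro sum_mono2) (auto simp: less_imp_le)
      moreover have "u N / (\<eta> * \<epsilon>) \<ge> 0" using u0 eta \<epsilon> by simp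
      ultimately show False using n by linarith
    qed
    then obtain j where j: "n = N + j" using le_Suc_ex by blast
    have "(\<Sum>i<n. \<gamma> i) = (\<Sum>i<N. \<gamma> i) + (\<Sum>i<j. \<gamma> (N + i))"
      unfolding j by (induction j) auto
    hence "u N / (\<eta> * \<epsilon>) < (\<Sum>i<j. \<gamma> (N + i))" using n by linarith
    hence "u N < \<eta> * \<epsilon> * (\<Sum>i<j. \<gamma> (N + i))" using eta \<epsilon> by (simp add: field_simps)
    hence "u (N + j) < 0" using desc[of j] by linarith
    then show False using u0[of "N+j"] by linarith
  qed
  then obtain m where m: "m \<ge> N" "u m \<le> 2 * \<epsilon>" by blast
  have "u (m + j) \<le> 2 * \<epsilon>" for j
  proof (induction j)
    case 0 then show ?case using m by simp
  next
    case (Suc j) then show ?case using stay[of "m + j"] m by simp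
  qed
  then have "\<forall>n\<ge>m. norm (u n - 0) < r"
  proof (intro allI impI)
    fix n assume "n \<ge> m"
    then obtain j where "n = m + j" using le_Suc_ex by blast
    then have "u n \<le> 2 * \<epsilon>" using \<open>\<And>j. u (m + j) \<le> 2 * \<epsilon>\<close> by blast
    then show "norm (u n - 0) < r" using u0[of n] r unfolding \<epsilon>_def by simp
  qed
  then show "\<exists>no. \<forall>n\<ge>no. norm (u n - 0) < r" by blast
qed



lemma maximal_ineq:
  fixes M :: "'a measure" and G :: "nat \<Rightarrow> 'a measure" and W :: "nat \<Rightarrow> 'a \<Rightarrow> real"
  assumes P: "prob_space M" and lam: "lv > 0"
    and Gsub: "\<And>k. sets (G k) \<subseteq> sets M" and Gsp: "\<And>k. space (G k) = space M"
    and Gmono: "\<And>k. sets (G k) \<subseteq> sets (G (Suc k))"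
    and Wm: "\<And>k. W k \<in> borel_measurable (G k)"
    and Wpos: "\<And>k \<omega>. \<omega> \<in> space M \<Longrightarrow> W k \<omega> \<ge> 0"
    and Wint: "\<And>k. integrable M (W k)"
    and super: "\<And>k B. k \<ge> n \<Longrightarrow> B \<in> sets (G k) \<Longrightarrow>
        (\<integral>\<omega>. indicator B \<omega> * W (Suc k) \<omega> \<partial>M) \<le> (\<integral>\<omega>. indicator B \<omega> * W k \<omega> \<partial>M)"
  shows "measure M {\<omega>\<in>space M. \<exists>k\<in>{n..m}. lv \<le> W k \<omega>} \<le> (\<integral>\<omega>. W n \<omega> \<partial>M) / lv"
proof -
  interpret prob_space M by (rule P)
  have WmM: "W k \<in> borel_measurable M" for k
    by (rule measurable_from_subalg[OF _ Wm]) (simp add: subalgebra_def Gsp Gsub)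
  define E where "E m = {\<omega>\<in>space M. \<exists>k\<in>{n..m}. lv \<le> W k \<omega>}" for m
  define A where "A m = {\<omega>\<in>space M. \<forall>k\<in>{n..m}. W k \<omega> < lv}" for m
  have EM: "E m \<in> sets M" for m
  proof -
    have "E m = (\<Union>k\<in>{n..m}. {\<omega>\<in>space M. lv \<le> W k \<omega>})" unfolding E_def by auto
    also have "\<dots> \<in> sets M" using WmM by (intro sets.finite_UN) auto
    finally show ?thesis .
  qed
  have AE_: "A m = space M - E m" for m unfolding A_def E_def by (auto simp: not_le)
  have AM: "A k \<in> sets M" for k using AE_ EM by auto
  have intind: "integrable M (\<lambda>\<omega>. indicator B \<omega> * W k \<omega>)" if "B \<in> sets M" for B k
    using integrable_real_mult_indicator[OF that Wint[of k]] by (simp add: mult.commute)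
  have intconst: "integrable M (\<lambda>\<omega>. indicator B \<omega> * a)" if "B \<in> sets M" for B and a :: real
    using integrable_real_mult_indicator[OF that integrable_const[of a]] by (simp add: mult.commute)
  have indpos: "(\<integral>\<omega>. indicator B \<omega> * W k \<omega> \<partial>M) \<ge> 0" for B k
    by (intro integral_nonneg_AE AE_I2) (auto simp: Wpos indicator_def)
  have main: "lv * measure M (E m) + (\<integral>\<omega>. indicator (A m) \<omega> * W m \<omega> \<partial>M) \<le> (\<integral>\<omega>. W n \<omega> \<partial>M)
       \<and> A m \<in> sets (G m)" if "n \<le> m" for m
    using that
  proof (induction m rule: dec_induct)
    case base
    have An: "A n = {\<omega>\<in>space M. W n \<omega> < lv}" unfolding A_def by auto
    have En: "E n = {\<omega>\<in>space M. lv \<le> W n \<omega>}" unfolding E_def by auto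
    have AG: "A n \<in> sets (G n)" 
    proof -
      note Wm[measurable]
      have "{\<omega>\<in>space (G n). W n \<omega> < lv} \<in> sets (G n)" by measurable
      then show ?thesis unfolding An Gsp .
    qed
    have "lv * measure M (E n) = (\<integral>\<omega>. indicator (E n) \<omega> * lv \<partial>M)" using EM by simp
    also have "\<dots> \<le> (\<integral>\<omega>. indicator (E n) \<omega> * W n \<omega> \<partial>M)"
      by (rule integral_mono[OF intconst[OF EM] intind[OF EM]]) (auto simp: indicator_def E_def)
    finally have "lv * measure M (E n) + (\<integral>\<omega>. indicator (A n) \<omega> * W n \<omega> \<partial>M)
       \<le> (\<integral>\<omega>. indicator (E n) \<omega> * W n \<omega> \<partial>M) + (\<integral>\<omega>. indicator (A n) \<omega> * W n \<omega> \<partial>M)" by simp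
    also have "\<dots> = (\<integral>\<omega>. indicator (E n) \<omega> * W n \<omega> + indicator (A n) \<omega> * W n \<omega> \<partial>M)"
      by (rule Bochner_Integration.integral_add[symmetric, OF intind[OF EM] intind[OF AM]])
    also have "\<dots> = (\<integral>\<omega>. W n \<omega> \<partial>M)"
      by (rule Bochner_Integration.integral_cong[OF refl]) (auto simp: AE_ indicator_def E_def)
    finally show ?case using AG by simp
  next
    case (step m)
    have AG: "A m \<in> sets (G m)" using step.IH by blast
    have AGs: "A m \<in> sets (G (Suc m))" using AG Gmono by blast
    have D1: "{\<omega>\<in>space M. W (Suc m) \<omega> < lv} \<in> sets (G (Suc m))"
    proof -
      note Wm[measurable]
      have "{\<omega>\<in>space (G (Suc m)). W (Suc m) \<omega> < lv} \<in> sets (G (Suc m))" by measurable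
      then show ?thesis unfolding Gsp .
    qed
    have Asuc: "A (Suc m) = A m \<inter> {\<omega>\<in>space M. W (Suc m) \<omega> < lv}"
      unfolding A_def using step.hyps by (auto simp: le_Suc_eq)
    have AGS: "A (Suc m) \<in> sets (G (Suc m))" unfolding Asuc using AGs D1 by blast
    define D where "D = A m \<inter> {\<omega>\<in>space M. lv \<le> W (Suc m) \<omega>}"
    have DM: "D \<in> sets M" unfolding D_def using AM WmM by measurable
    have Esuc: "E (Suc m) = E m \<union> D" "E m \<inter> D = {}"
      unfolding E_def D_def A_def using step.hyps by (auto simp: le_Suc_eq not_le) (meson atLeastAtMost_iff not_le)+
    have mE: "measure M (E (Suc m)) = measure M (E m) + measure M D"
      unfolding Esuc(1) using Esuc(2) EM DM by (intro finite_measure_Union) auto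
    have "lv * measure M D = (\<integral>\<omega>. indicator D \<omega> * lv \<partial>M)" using DM by simp
    also have "\<dots> \<le> (\<integral>\<omega>. indicator D \<omega> * W (Suc m) \<omega> \<partial>M)"
      by (rule integral_mono[OF intconst[OF DM] intind[OF DM]]) (auto simp: indicator_def D_def)
    finally have hD: "lv * measure M D \<le> (\<integral>\<omega>. indicator D \<omega> * W (Suc m) \<omega> \<partial>M)" .
    have split: "(\<integral>\<omega>. indicator (A m) \<omega> * W (Suc m) \<omega> \<partial>M)
        = (\<integral>\<omega>. indicator (A (Suc m)) \<omega> * W (Suc m) \<omega> \<partial>M) + (\<integral>\<omega>. indicator D \<omega> * W (Suc m) \<omega> \<partial>M)"
    proof -
      have "(\<integral>\<omega>. indicator (A m) \<omega> * W (Suc m) \<omega> \<partial>M)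
          = (\<integral>\<omega>. indicator (A (Suc m)) \<omega> * W (Suc m) \<omega> + indicator D \<omega> * W (Suc m) \<omega> \<partial>M)"
        by (rule Bochner_Integration.integral_cong[OF refl]) (auto simp: Asuc D_def indicator_def)
      also have "\<dots> = (\<integral>\<omega>. indicator (A (Suc m)) \<omega> * W (Suc m) \<omega> \<partial>M) + (\<integral>\<omega>. indicator D \<omega> * W (Suc m) \<omega> \<partial>M)"
        by (rule Bochner_Integration.integral_add[OF intind[OF AM] intind[OF DM]])
      finally show ?thesis .
    qed
    have "lv * measure M (E (Suc m)) + (\<integral>\<omega>. indicator (A (Suc m)) \<omega> * W (Suc m) \<omega> \<partial>M)
        \<le> lv * measure M (E m) + (\<integral>\<omega>. indicator (A m) \<omega> * W (Suc m) \<omega> \<partial>M)"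
      using mE hD split by (simp add: algebra_simps)
    also have "\<dots> \<le> lv * measure M (E m) + (\<integral>\<omega>. indicator (A m) \<omega> * W m \<omega> \<partial>M)"
      using super[OF step.hyps(1) AG] by simp
    also have "\<dots> \<le> (\<integral>\<omega>. W n \<omega> \<partial>M)" using step.IH by blast
    finally show ?case using AGS by simp
  qed
  show ?thesis
  proof (cases "n \<le> m")
    case True
    have "lv * measure M (E m) \<le> (\<integral>\<omega>. W n \<omega> \<partial>M)" using main[OF True] indpos[of "A m" m] by linarith
    then show ?thesis using lam unfolding E_def by (simp add: field_simps)
  next
    case False
    then have e: "{\<omega>\<in>space M. \<exists>k\<in>{n..m}. lv \<le> W k \<omega>} = {}" by auto
    have "(\<integral>\<omega>. W n \<omega> \<partial>M) \<ge> 0" by (intro integral_nonneg_AE AE_I2) (simp add: Wpos)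
    then show ?thesis unfolding e using lam by simp
  qed
qed



lemma norm_diff_sq:
  fixes a b :: "'v::real_inner"
  shows "(norm (a - g *\<^sub>R b))\<^sup>2 = (norm a)\<^sup>2 - 2 * g * inner a b + g\<^sup>2 * (norm b)\<^sup>2"
  unfolding power2_norm_eq_inner by (simp add: inner_diff_left inner_diff_right inner_commute algebra_simps power2_eq_square)

lemma A_bound:
  fixes F :: "'v::euclidean_space \<Rightarrow> 'v"
  assumes y: "y \<in> X" and s: "s \<in> X" and g: "g \<ge> 0"
    and Lip: "\<forall>y\<in>X. \<forall>z\<in>X. norm (F y - F z) \<le> L * norm (y - z)"
    and smono: "\<forall>y\<in>X. \<forall>z\<in>X. inner (F y - F z) (y - z) \<ge> \<eta> * (norm (y - z))\<^sup>2"
  shows "(norm (y - s - g *\<^sub>R (F y - F s)))\<^sup>2 \<le> (1 - 2*g*\<eta> + g\<^sup>2*L\<^sup>2) * (norm (y - s))\<^sup>2"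
proof -
  have h1: "inner (y - s) (F y - F s) \<ge> \<eta> * (norm (y - s))\<^sup>2" using smono y s by (simp add: inner_commute)
  have "norm (F y - F s) \<le> L * norm (y - s)" using Lip y s by blast
  then have h2: "(norm (F y - F s))\<^sup>2 \<le> L\<^sup>2 * (norm (y - s))\<^sup>2"
    by (metis norm_ge_zero power_mono power_mult_distrib)
  have "(norm (y - s - g *\<^sub>R (F y - F s)))\<^sup>2 = (norm (y-s))\<^sup>2 - 2 * g * inner (y-s) (F y - F s) + g\<^sup>2 * (norm (F y - F s))\<^sup>2"
    by (rule norm_diff_sq)
  also have "\<dots> \<le> (norm (y-s))\<^sup>2 - 2 * g * (\<eta> * (norm (y - s))\<^sup>2) + g\<^sup>2 * (L\<^sup>2 * (norm (y - s))\<^sup>2)"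
    using h1 h2 g by (intro add_mono diff_mono mult_left_mono) auto
  also have "\<dots> = (1 - 2*g*\<eta> + g\<^sup>2*L\<^sup>2) * (norm (y - s))\<^sup>2" by (simp add: algebra_simps)
  finally show ?thesis .
qed

lemma vi_proj:
  fixes F :: "'v::euclidean_space \<Rightarrow> 'v"
  assumes X: "closed X" "convex X" and s: "s \<in> VI_sol X F" and g: "g > 0"
  shows "closest_point X (s - g *\<^sub>R F s) = s"
proof -
  have sX: "s \<in> X" and sv: "\<And>x. x \<in> X \<Longrightarrow> inner (x - s) (F s) \<ge> 0" using s unfolding VI_sol_def by auto
  have "\<forall>z\<in>X. dist (s - g *\<^sub>R F s) s \<le> dist (s - g *\<^sub>R F s) z"
  proof
    fix z assume z: "z \<in> X"
    have e1: "dist (s - g *\<^sub>R F s) z = norm ((s - z) - g *\<^sub>R F s)" by (simp add: dist_norm algebra_simps)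
    have e2: "inner (s - z) (F s) = - inner (z - s) (F s)" by (metis inner_minus_left minus_diff_eq)
    have e3: "(norm ((s - z) - g *\<^sub>R F s))\<^sup>2 = (norm (s - z))\<^sup>2 + 2 * g * inner (z - s) (F s) + g\<^sup>2 * (norm (F s))\<^sup>2"
      unfolding norm_diff_sq e2 by simp
    have e4: "0 \<le> 2 * g * inner (z - s) (F s)" using sv[OF z] g by simp
    have e5: "dist (s - g *\<^sub>R F s) s = norm (g *\<^sub>R F s)" by (simp add: dist_norm)
    have e6: "(norm (g *\<^sub>R F s))\<^sup>2 = g\<^sup>2 * (norm (F s))\<^sup>2" using g by (simp add: power_mult_distrib)
    have "(dist (s - g *\<^sub>R F s) s)\<^sup>2 \<le> (dist (s - g *\<^sub>R F s) z)\<^sup>2"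
      unfolding e1 e3 e5 e6 using e4 by simp
    then show "dist (s - g *\<^sub>R F s) s \<le> dist (s - g *\<^sub>R F s) z"
      by (rule power2_le_imp_le) auto
  qed
  then show ?thesis using closest_point_unique[OF X(2,1) sX] by simp
qed

lemma vi_fix:
  fixes F :: "'v::euclidean_space \<Rightarrow> 'v"
  assumes X: "closed X" "convex X" and sX: "s \<in> X" and g: "g > 0"
    and fx: "closest_point X (s - g *\<^sub>R F s) = s"
  shows "s \<in> VI_sol X F"
  unfolding VI_sol_def
proof (safe intro!: sX)
  fix x assume x: "x \<in> X"
  have "inner ((s - g *\<^sub>R F s) - s) (x - s) \<le> 0"
    using closest_point_dot[OF X(2,1) x, of "s - g *\<^sub>R F s"] fx by simp
  then have "- g * inner (F s) (x - s) \<le> 0" by (simp add: inner_diff_left)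
  then show "0 \<le> inner (x - s) (F s)" using g by (simp add: inner_commute zero_le_mult_iff)
qed

lemma vi_unique_exists:
  fixes F :: "'v::euclidean_space \<Rightarrow> 'v"
  assumes X: "X \<noteq> {}" "closed X" "convex X"
    and Lip: "L > 0" "\<forall>y\<in>X. \<forall>z\<in>X. norm (F y - F z) \<le> L * norm (y - z)"
    and smono: "\<eta> > 0" "\<forall>y\<in>X. \<forall>z\<in>X. inner (F y - F z) (y - z) \<ge> \<eta> * (norm (y - z))\<^sup>2"
  shows "\<exists>s. VI_sol X F = {s}"
proof -
  define \<tau> where "\<tau> = \<eta> / L\<^sup>2"
  have \<tau>: "\<tau> > 0" unfolding \<tau>_def using Lip smono by simp
  define T where "T y = closest_point X (y - \<tau> *\<^sub>R F y)" for y
  define q where "q = sqrt (max 0 (1 - \<eta>\<^sup>2 / L\<^sup>2))"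
  have q0: "0 \<le> q" unfolding q_def by simp
  have q1: "q < 1" unfolding q_def using Lip smono by (simp add: max_def)
  have "\<exists>!x\<in>X. T x = x"
  proof (rule Banach_fix[OF _ X(1) q0 q1])
    show "Topological_Spaces.complete X" using X(2) by (simp add: complete_eq_closed)
    show "T ` X \<subseteq> X" unfolding T_def using closest_point_in_set[OF X(2,1)] by auto
    fix y z assume y: "y \<in> X" and z: "z \<in> X"
    have "dist (T y) (T z) \<le> dist (y - \<tau> *\<^sub>R F y) (z - \<tau> *\<^sub>R F z)"
      unfolding T_def by (rule closest_point_lipschitz[OF X(3,2,1)])
    also have "\<dots> = norm (y - z - \<tau> *\<^sub>R (F y - F z))" by (simp add: dist_norm algebra_simps)
    finally have d1: "dist (T y) (T z) \<le> norm (y - z - \<tau> *\<^sub>R (F y - F z))" .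
    have c1: "(norm (y - z - \<tau> *\<^sub>R (F y - F z)))\<^sup>2 \<le> (1 - 2*\<tau>*\<eta> + \<tau>\<^sup>2*L\<^sup>2) * (norm (y - z))\<^sup>2"
      by (rule A_bound[OF y z less_imp_le[OF \<tau>] Lip(2) smono(2)])
    have c2: "1 - 2*\<tau>*\<eta> + \<tau>\<^sup>2*L\<^sup>2 = 1 - \<eta>\<^sup>2 / L\<^sup>2"
      unfolding \<tau>_def using Lip by (simp add: field_simps power2_eq_square)
    have c3: "1 - \<eta>\<^sup>2 / L\<^sup>2 \<le> q\<^sup>2" unfolding q_def by simp
    have c4: "(1 - \<eta>\<^sup>2 / L\<^sup>2) * (norm (y - z))\<^sup>2 \<le> q\<^sup>2 * (norm (y - z))\<^sup>2"
      using c3 by (intro mult_right_mono) auto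
    have c5: "(q * dist y z)\<^sup>2 = q\<^sup>2 * (norm (y - z))\<^sup>2" by (simp add: power_mult_distrib dist_norm)
    have "(norm (y - z - \<tau> *\<^sub>R (F y - F z)))\<^sup>2 \<le> (q * dist y z)\<^sup>2"
    proof -
      have c1': "(norm (y - z - \<tau> *\<^sub>R (F y - F z)))\<^sup>2 \<le> (1 - \<eta>\<^sup>2 / L\<^sup>2) * (norm (y - z))\<^sup>2"
        using c1 by (simp only: c2)
      show ?thesis using order_trans[OF c1' c4] by (simp only: c5)
    qed
    then have "norm (y - z - \<tau> *\<^sub>R (F y - F z)) \<le> q * dist y z"
      by (rule power2_le_imp_le) (use q0 in auto)
    then show "dist (T y) (T z) \<le> q * dist y z" using d1 by linarith
  qed
  then obtain s where sX: "s \<in> X" and sT: "T s = s" by blast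
  have sV: "s \<in> VI_sol X F" using vi_fix[OF X(2,3) sX \<tau>] sT unfolding T_def by simp
  have "t = s" if t: "t \<in> VI_sol X F" for t
  proof -
    have tX: "t \<in> X" and tv: "inner (s - t) (F t) \<ge> 0" using t sX unfolding VI_sol_def by auto
    have sv: "inner (t - s) (F s) \<ge> 0" using sV tX unfolding VI_sol_def by auto
    have "inner (F t - F s) (t - s) \<le> 0" using tv sv
      by (simp add: inner_diff_left inner_diff_right inner_commute)
    moreover have "inner (F t - F s) (t - s) \<ge> \<eta> * (norm (t - s))\<^sup>2" using smono(2) tX sX by blast
    ultimately have "\<eta> * (norm (t - s))\<^sup>2 \<le> 0" by linarith
    then have "norm (t - s) = 0" using smono(1) by (simp add: mult_le_0_iff)
    then show ?thesis by simp
  qed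
  then have "VI_sol X F = {s}" using sV by blast
  then show ?thesis by blast
qed

lemma step_ineq:
  fixes F :: "'v::euclidean_space \<Rightarrow> 'v"
  assumes X: "X \<noteq> {}" "closed X" "convex X" and y: "y \<in> X" and s: "s \<in> VI_sol X F" and g: "g > 0"
    and Lip: "\<forall>y\<in>X. \<forall>z\<in>X. norm (F y - F z) \<le> L * norm (y - z)"
    and smono: "\<forall>y\<in>X. \<forall>z\<in>X. inner (F y - F z) (y - z) \<ge> \<eta> * (norm (y - z))\<^sup>2"
  shows "(norm (closest_point X (y - g *\<^sub>R (F y + v)) - s))\<^sup>2 \<le>
     (1 - 2*g*\<eta> + g\<^sup>2*L\<^sup>2) * (norm (y - s))\<^sup>2 - 2 * g * inner (y - s - g *\<^sub>R (F y - F s)) v + g\<^sup>2 * (norm v)\<^sup>2"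
proof -
  have sX: "s \<in> X" using s unfolding VI_sol_def by auto
  have "norm (closest_point X (y - g *\<^sub>R (F y + v)) - s)
      = dist (closest_point X (y - g *\<^sub>R (F y + v))) (closest_point X (s - g *\<^sub>R F s))"
    using vi_proj[OF X(2,3) s g] by (simp add: dist_norm)
  also have "\<dots> \<le> dist (y - g *\<^sub>R (F y + v)) (s - g *\<^sub>R F s)"
    by (rule closest_point_lipschitz[OF X(3,2,1)])
  also have "\<dots> = norm ((y - s - g *\<^sub>R (F y - F s)) - g *\<^sub>R v)"
    by (simp add: dist_norm algebra_simps)
  finally have "(norm (closest_point X (y - g *\<^sub>R (F y + v)) - s))\<^sup>2 \<le> (norm ((y - s - g *\<^sub>R (F y - F s)) - g *\<^sub>R v))\<^sup>2"
    by (simp add: power_mono)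
  also have "\<dots> = (norm (y - s - g *\<^sub>R (F y - F s)))\<^sup>2 - 2 * g * inner (y - s - g *\<^sub>R (F y - F s)) v + g\<^sup>2 * (norm v)\<^sup>2"
    by (rule norm_diff_sq)
  also have "\<dots> \<le> (1 - 2*g*\<eta> + g\<^sup>2*L\<^sup>2) * (norm (y - s))\<^sup>2 - 2 * g * inner (y - s - g *\<^sub>R (F y - F s)) v + g\<^sup>2 * (norm v)\<^sup>2"
    using A_bound[OF y sX _ Lip smono] g by simp
  finally show ?thesis .
qed



locale SA = prob_space M for M :: "'a measure" +
  fixes S :: "'b measure" and X :: "(real ^ 'n) set"
    and F :: "real ^ 'n \<Rightarrow> real ^ 'n"
    and \<Phi> :: "real ^ 'n \<Rightarrow> 'b \<Rightarrow> real ^ 'n"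
    and \<xi>s :: "nat \<Rightarrow> 'a \<Rightarrow> 'b"
    and x0 :: "'a \<Rightarrow> real ^ 'n" and x :: "nat \<Rightarrow> 'a \<Rightarrow> real ^ 'n"
    and w :: "nat \<Rightarrow> 'a \<Rightarrow> real ^ 'n"
    and \<gamma> :: "nat \<Rightarrow> real" and L \<eta> \<nu> c :: real
  assumes X: "X \<noteq> {}" "closed X" "convex X"
    and \<Phi>_meas: "(\<lambda>(y, s). \<Phi> y s) \<in> borel_measurable (borel \<Otimes>\<^sub>M S)"
    and Lip: "L > 0" "\<forall>y\<in>X. \<forall>z\<in>X. norm (F y - F z) \<le> L * norm (y - z)"
    and smono: "\<eta> > 0" "\<forall>y\<in>X. \<forall>z\<in>X. inner (F y - F z) (y - z) \<ge> \<eta> * (norm (y - z))\<^sup>2"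
    and \<xi>s_meas: "\<And>k. \<xi>s k \<in> measurable M S"
    and x0_meas: "x0 \<in> borel_measurable M"
    and x0_X: "\<And>\<omega>. \<omega> \<in> space M \<Longrightarrow> x0 \<omega> \<in> X"
    and x0_sq: "integrable M (\<lambda>\<omega>. (norm (x0 \<omega>))\<^sup>2)"
    and x_0: "\<And>\<omega>. x 0 \<omega> = x0 \<omega>"
    and x_Suc: "\<And>k \<omega>. x (Suc k) \<omega> =
                   closest_point X (x k \<omega> - \<gamma> k *\<^sub>R (F (x k \<omega>) + w k \<omega>))"
    and w_def: "\<And>k \<omega>. w k \<omega> = \<Phi> (x k \<omega>) (\<xi>s k \<omega>) - F (x k \<omega>)"
    and w_mean: "\<And>k i. AE \<omega> in M. real_cond_exp M (nat_filt M S x0 \<xi>s k) (\<lambda>\<omega>. w k \<omega> $ i) \<omega> = 0"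
    and w_var: "\<nu> > 0" "\<And>k. AE \<omega> in M.
                 nn_cond_exp M (nat_filt M S x0 \<xi>s k) (\<lambda>\<omega>. ennreal ((norm (w k \<omega>))\<^sup>2)) \<omega> \<le> ennreal (\<nu>\<^sup>2)"
    and c: "c > 0"
    and \<gamma>0: "0 < \<gamma> 0" "\<gamma> 0 < 1 / c"
    and \<gamma>_Suc: "\<And>k. \<gamma> (Suc k) = \<gamma> k * (1 - c * \<gamma> k)"
begin

abbreviation "Fk k \<equiv> nat_filt M S x0 \<xi>s k"

definition Gen :: "nat \<Rightarrow> 'a set set" where
  "Gen k = {x0 -` A \<inter> space M | A. A \<in> sets borel} \<union> (\<Union>j<k. {\<xi>s j -` A \<inter> space M | A. A \<in> sets S})"

lemma Gen_Pow: "Gen k \<subseteq> Pow (space M)" unfolding Gen_def by auto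

lemma Gen_sets: "Gen k \<subseteq> sets M"
proof -
  have "x0 -` A \<inter> space M \<in> sets M" if "A \<in> sets borel" for A using x0_meas that by (rule measurable_sets)
  moreover have "\<xi>s j -` A \<inter> space M \<in> sets M" if "A \<in> sets S" for A j using \<xi>s_meas that by (rule measurable_sets)
  ultimately show ?thesis unfolding Gen_def by blast
qed

lemma Fk_eq: "Fk k = sigma (space M) (Gen k)" unfolding nat_filt_def Gen_def ..

lemma space_Fk[simp]: "space (Fk k) = space M" unfolding Fk_eq by (rule space_measure_of[OF Gen_Pow])

lemma sets_Fk: "sets (Fk k) = sigma_sets (space M) (Gen k)" unfolding Fk_eq by (rule sets_measure_of[OF Gen_Pow])

lemma Fk_sub: "sets (Fk k) \<subseteq> sets M"
  unfolding sets_Fk by (rule sets.sigma_sets_subset[OF Gen_sets])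

lemma Fk_subalg: "subalgebra M (Fk k)" unfolding subalgebra_def using Fk_sub by simp

lemma Fk_mono: "sets (Fk k) \<subseteq> sets (Fk (Suc k))"
  unfolding sets_Fk by (rule sigma_sets_mono') (unfold Gen_def, rule Un_mono[OF order.refl UN_mono], auto)

lemma Fk_mono_le: "k \<le> m \<Longrightarrow> sets (Fk k) \<subseteq> sets (Fk m)"
  by (induction m rule: dec_induct) (use Fk_mono in blast)+

lemma meas_lift: "f \<in> measurable (Fk k) N \<Longrightarrow> k \<le> m \<Longrightarrow> f \<in> measurable (Fk m) N"
  by (rule measurable_from_subalg[of "Fk m" "Fk k"]) (auto simp: subalgebra_def Fk_mono_le)

lemma meas_M: "f \<in> measurable (Fk k) N \<Longrightarrow> f \<in> measurable M N"
  by (rule measurable_from_subalg[OF Fk_subalg])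

lemma x0_Fk: "x0 \<in> borel_measurable (Fk k)"
proof (rule measurableI)
  fix A :: "(real^'n) set" assume "A \<in> sets borel"
  then have "x0 -` A \<inter> space M \<in> Gen k" unfolding Gen_def by blast
  then show "x0 -` A \<inter> space (Fk k) \<in> sets (Fk k)" unfolding sets_Fk by auto
qed simp

lemma xi_Fk: "j < k \<Longrightarrow> \<xi>s j \<in> measurable (Fk k) S"
proof (rule measurableI)
  fix \<omega> assume "\<omega> \<in> space (Fk k)"
  then show "\<xi>s j \<omega> \<in> space S" using measurable_space[OF \<xi>s_meas] by simp
next
  fix A assume "j < k" "A \<in> sets S"
  then have "\<xi>s j -` A \<inter> space M \<in> Gen k" unfolding Gen_def by blast
  then show "\<xi>s j -` A \<inter> space (Fk k) \<in> sets (Fk k)" unfolding sets_Fk by auto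
qed

lemma sfs: "sigma_finite_subalgebra M (Fk k)"
proof -
  interpret finite_measure_subalgebra M "Fk k"
    by unfold_locales (rule Fk_subalg)
  show ?thesis by unfold_locales
qed

lemma x_X: "\<omega> \<in> space M \<Longrightarrow> x k \<omega> \<in> X"
  by (cases k) (auto simp: x_0 x0_X x_Suc closest_point_in_set X)

lemma x_Suc': "x (Suc k) \<omega> = closest_point X (x k \<omega> - \<gamma> k *\<^sub>R \<Phi> (x k \<omega>) (\<xi>s k \<omega>))"
  unfolding x_Suc w_def by simp

lemma cp_meas: "closest_point X \<in> borel_measurable borel"
  by (rule borel_measurable_continuous_onI) (rule continuous_on_closest_point[OF X(3,2,1)])

lemma x_Fk: "x k \<in> borel_measurable (Fk k)"
proof (induction k)
  case 0
  then show ?case using x0_Fk by (simp add: x_0[abs_def] x_0)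
next
  case (Suc k)
  have xk: "x k \<in> borel_measurable (Fk (Suc k))" using meas_lift[OF Suc] by simp
  have xi: "\<xi>s k \<in> measurable (Fk (Suc k)) S" by (rule xi_Fk) simp
  have pr: "(\<lambda>\<omega>. (x k \<omega>, \<xi>s k \<omega>)) \<in> measurable (Fk (Suc k)) (borel \<Otimes>\<^sub>M S)"
    using xk xi by (rule measurable_Pair)
  have ph: "(\<lambda>\<omega>. \<Phi> (x k \<omega>) (\<xi>s k \<omega>)) \<in> borel_measurable (Fk (Suc k))"
    using measurable_compose[OF pr \<Phi>_meas] by simp
  have arg: "(\<lambda>\<omega>. x k \<omega> - \<gamma> k *\<^sub>R \<Phi> (x k \<omega>) (\<xi>s k \<omega>)) \<in> borel_measurable (Fk (Suc k))"
    using xk ph by measurable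
  have "(\<lambda>\<omega>. closest_point X (x k \<omega> - \<gamma> k *\<^sub>R \<Phi> (x k \<omega>) (\<xi>s k \<omega>))) \<in> borel_measurable (Fk (Suc k))"
    using measurable_compose[OF arg cp_meas] by simp
  then show ?case unfolding x_Suc'[abs_def] by simp
qed

definition Fe :: "real^'n \<Rightarrow> real^'n" where "Fe y = F (closest_point X y)"

lemma Fe_cont: "continuous_on UNIV Fe"
proof -
  have "L-lipschitz_on X F" using Lip by (intro lipschitz_onI) (auto simp: dist_norm)
  then have cF: "continuous_on X F" by (rule lipschitz_on_continuous_on)
  have "continuous_on UNIV (F \<circ> closest_point X)"
    by (rule continuous_on_compose[OF continuous_on_closest_point[OF X(3,2,1)]])
       (rule continuous_on_subset[OF cF], use closest_point_in_set[OF X(2,1)] in auto)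
  then show ?thesis unfolding Fe_def[abs_def] o_def by simp
qed

lemma Fx_Fk: "(\<lambda>\<omega>. F (x k \<omega>)) \<in> borel_measurable (Fk k)"
proof -
  have "(\<lambda>\<omega>. Fe (x k \<omega>)) \<in> borel_measurable (Fk k)"
    using measurable_compose[OF x_Fk borel_measurable_continuous_onI[OF Fe_cont]] by simp
  then show ?thesis
    by (rule measurable_cong[THEN iffD1, rotated]) (simp add: Fe_def closest_point_self x_X)
qed

lemma w_Fk: "w k \<in> borel_measurable (Fk (Suc k))"
proof -
  have xk: "x k \<in> borel_measurable (Fk (Suc k))" using meas_lift[OF x_Fk] by simp
  have xi: "\<xi>s k \<in> measurable (Fk (Suc k)) S" by (rule xi_Fk) simp
  have pr: "(\<lambda>\<omega>. (x k \<omega>, \<xi>s k \<omega>)) \<in> measurable (Fk (Suc k)) (borel \<Otimes>\<^sub>M S)"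
    using xk xi by (rule measurable_Pair)
  have ph: "(\<lambda>\<omega>. \<Phi> (x k \<omega>) (\<xi>s k \<omega>)) \<in> borel_measurable (Fk (Suc k))"
    using measurable_compose[OF pr \<Phi>_meas] by simp
  have fx: "(\<lambda>\<omega>. F (x k \<omega>)) \<in> borel_measurable (Fk (Suc k))" using meas_lift[OF Fx_Fk] by simp
  show ?thesis unfolding w_def[abs_def] using ph fx by measurable
qed

lemma x_M: "x k \<in> borel_measurable M" using meas_M[OF x_Fk] .
lemma Fx_M: "(\<lambda>\<omega>. F (x k \<omega>)) \<in> borel_measurable M" using meas_M[OF Fx_Fk] .
lemma w_M: "w k \<in> borel_measurable M" using meas_M[OF w_Fk] .

end

lemma two_prod_le_sq: fixes x y :: real shows "2 * x * y \<le> x\<^sup>2 + y\<^sup>2"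
proof -
  have "0 \<le> (x - y)\<^sup>2" by simp
  then show ?thesis by (simp add: power2_diff)
qed
lemma prod_le_sq: fixes x y :: real assumes "0 \<le> x" "0 \<le> y" shows "x * y \<le> x\<^sup>2 + y\<^sup>2"
  using two_prod_le_sq[of x y] mult_nonneg_nonneg[OF assms] by linarith
lemma norm_diff_sq_le: fixes a b :: "'v::real_normed_vector" shows "(norm (a - b))\<^sup>2 \<le> 2 * (norm a)\<^sup>2 + 2 * (norm b)\<^sup>2"
proof -
  have "norm (a - b) \<le> norm a + norm b" by (rule norm_triangle_ineq4)
  then have "(norm (a - b))\<^sup>2 \<le> (norm a + norm b)\<^sup>2" by (simp add: power_mono)
  also have "\<dots> \<le> 2 * (norm a)\<^sup>2 + 2 * (norm b)\<^sup>2" using two_prod_le_sq[of "norm a" "norm b"]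
    by (simp add: power2_sum)
  finally show ?thesis .
qed

lemma vec_nth_measurable[measurable (raw)]:
  fixes f :: "'a \<Rightarrow> real ^ 'n"
  shows "f \<in> borel_measurable M \<Longrightarrow> (\<lambda>x. f x $ i) \<in> borel_measurable M"
  by (erule measurable_compose[OF _ borel_measurable_continuous_onI[OF linear_continuous_on[OF bounded_linear_vec_nth]]])

context SA begin

definition sol where "sol = (SOME s. VI_sol X F = {s})"

lemma sol: "VI_sol X F = {sol}"
  unfolding sol_def by (rule someI_ex[OF vi_unique_exists[OF X Lip smono]])

lemma sol_VI: "sol \<in> VI_sol X F" using sol by simp
lemma sol_X: "sol \<in> X" using sol_VI unfolding VI_sol_def by simp

definition V where "V k \<omega> = (norm (x k \<omega> - sol))\<^sup>2"
definition a where "a k \<omega> = x k \<omega> - sol - \<gamma> k *\<^sub>R (F (x k \<omega>) - F sol)"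
definition q where "q k = 1 - 2 * \<gamma> k * \<eta> + (\<gamma> k)\<^sup>2 * L\<^sup>2"

lemma gpos: "\<gamma> k > 0" and glim: "\<gamma> \<longlonglongrightarrow> 0" and gdiv: "\<exists>n. B < (\<Sum>i<n. \<gamma> i)"
  using gamma_props[OF c \<gamma>0 \<gamma>_Suc] by auto

lemma V_Fk: "V k \<in> borel_measurable (Fk k)"
  unfolding V_def[abs_def] using x_Fk[of k] by measurable

lemma a_Fk: "a k \<in> borel_measurable (Fk k)"
  unfolding a_def[abs_def] using x_Fk[of k] Fx_Fk[of k] by measurable

lemma V_M: "V k \<in> borel_measurable M" using meas_M[OF V_Fk] .
lemma a_M: "a k \<in> borel_measurable M" using meas_M[OF a_Fk] .

lemma V_nonneg: "V k \<omega> \<ge> 0" unfolding V_def by simp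

lemma a_sq: "\<omega> \<in> space M \<Longrightarrow> (norm (a k \<omega>))\<^sup>2 \<le> q k * V k \<omega>"
  unfolding a_def V_def q_def
  by (rule A_bound[OF x_X sol_X less_imp_le[OF gpos] Lip(2) smono(2)])

lemma Fk_M: "B \<in> sets (Fk k) \<Longrightarrow> B \<in> sets M" using Fk_sub by blast

lemma wsq:
  assumes B: "B \<in> sets (Fk k)"
  shows "integrable M (\<lambda>\<omega>. indicator B \<omega> * (norm (w k \<omega>))\<^sup>2)"
    and "(\<integral>\<omega>. indicator B \<omega> * (norm (w k \<omega>))\<^sup>2 \<partial>M) \<le> \<nu>\<^sup>2 * measure M B"
proof -
  interpret sigma_finite_subalgebra M "Fk k" by (rule sfs)
  have BM: "B \<in> sets M" using Fk_M[OF B] .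
  have wM[measurable]: "w k \<in> borel_measurable M" by (rule w_M)
  have indF: "(indicator B :: 'a \<Rightarrow> ennreal) \<in> borel_measurable (Fk k)" using B by measurable
  define g where "g \<omega> = ennreal ((norm (w k \<omega>))\<^sup>2)" for \<omega>
  have gM: "g \<in> borel_measurable M" unfolding g_def[abs_def] by measurable
  have "(\<integral>\<^sup>+\<omega>. indicator B \<omega> * g \<omega> \<partial>M) = (\<integral>\<^sup>+\<omega>. indicator B \<omega> * nn_cond_exp M (Fk k) g \<omega> \<partial>M)"
    by (rule nn_cond_exp_intg[OF indF gM, symmetric])
  also have "\<dots> \<le> (\<integral>\<^sup>+\<omega>. ennreal (\<nu>\<^sup>2) * indicator B \<omega> \<partial>M)"
  proof (rule nn_integral_mono_AE)
    show "AE \<omega> in M. indicator B \<omega> * nn_cond_exp M (Fk k) g \<omega> \<le> ennreal (\<nu>\<^sup>2) * indicator B \<omega>"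
      using w_var(2)[of k] unfolding g_def[symmetric]
      by eventually_elim (auto simp: indicator_def)
  qed
  also have "\<dots> = ennreal (\<nu>\<^sup>2) * emeasure M B" using BM by (rule nn_integral_cmult_indicator)
  also have "\<dots> = ennreal (\<nu>\<^sup>2 * measure M B)" by (simp add: emeasure_eq_measure ennreal_mult)
  finally have I: "(\<integral>\<^sup>+\<omega>. indicator B \<omega> * g \<omega> \<partial>M) \<le> ennreal (\<nu>\<^sup>2 * measure M B)" .
  define f where "f \<omega> = indicator B \<omega> * (norm (w k \<omega>))\<^sup>2" for \<omega>
  have fM: "f \<in> borel_measurable M" unfolding f_def[abs_def] using BM by measurable
  have fpos: "AE \<omega> in M. 0 \<le> f \<omega>" by (intro AE_I2) (simp add: f_def)
  have fg: "ennreal (f \<omega>) = indicator B \<omega> * g \<omega>" for \<omega> by (simp add: f_def g_def indicator_def)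
  have nnf: "(\<integral>\<^sup>+\<omega>. ennreal (f \<omega>) \<partial>M) \<le> ennreal (\<nu>\<^sup>2 * measure M B)" unfolding fg using I .
  have fint: "integrable M f"
    using fM fpos by (rule integrableI_nonneg) (use nnf in \<open>auto simp: top.not_eq_extremum order_le_less_trans\<close>)
  then show "integrable M (\<lambda>\<omega>. indicator B \<omega> * (norm (w k \<omega>))\<^sup>2)" unfolding f_def .
  have "ennreal (\<integral>\<omega>. f \<omega> \<partial>M) \<le> ennreal (\<nu>\<^sup>2 * measure M B)"
    using nnf nn_integral_eq_integral[OF fint fpos] by simp
  then show "(\<integral>\<omega>. indicator B \<omega> * (norm (w k \<omega>))\<^sup>2 \<partial>M) \<le> \<nu>\<^sup>2 * measure M B"
    unfolding f_def by (subst (asm) ennreal_le_iff) auto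
qed

lemma a_sq_int: "integrable M (V k) \<Longrightarrow> integrable M (\<lambda>\<omega>. (norm (a k \<omega>))\<^sup>2)"
proof -
  assume "integrable M (V k)"
  then have "integrable M (\<lambda>\<omega>. q k * V k \<omega>)" by simp
  moreover have "(\<lambda>\<omega>. (norm (a k \<omega>))\<^sup>2) \<in> borel_measurable M" using a_M[of k] by measurable
  moreover have "AE \<omega> in M. norm ((norm (a k \<omega>))\<^sup>2) \<le> norm (q k * V k \<omega>)"
  proof (intro AE_I2)
    fix \<omega> assume "\<omega> \<in> space M"
    then have h: "(norm (a k \<omega>))\<^sup>2 \<le> q k * V k \<omega>" by (rule a_sq)
    show "norm ((norm (a k \<omega>))\<^sup>2) \<le> norm (q k * V k \<omega>)" using h abs_ge_self[of "q k * V k \<omega>"] by simp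
  qed
  ultimately show ?thesis by (rule Bochner_Integration.integrable_bound)
qed

lemma cross:
  assumes B: "B \<in> sets (Fk k)" and Vint: "integrable M (V k)"
  shows "integrable M (\<lambda>\<omega>. indicator B \<omega> * inner (a k \<omega>) (w k \<omega>))"
    and "(\<integral>\<omega>. indicator B \<omega> * inner (a k \<omega>) (w k \<omega>) \<partial>M) = 0"
proof -
  interpret sigma_finite_subalgebra M "Fk k" by (rule sfs)
  have BM: "B \<in> sets M" using Fk_M[OF B] .
  have wM[measurable]: "w k \<in> borel_measurable M" by (rule w_M)
  have aM[measurable]: "a k \<in> borel_measurable M" by (rule a_M)
  have aF[measurable]: "a k \<in> borel_measurable (Fk k)" by (rule a_Fk)
  have BM'[measurable]: "B \<in> sets M" by (rule BM)
  have wsqi: "integrable M (\<lambda>\<omega>. (norm (w k \<omega>))\<^sup>2)"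
  proof -
    have "integrable M (\<lambda>\<omega>. (norm (w k \<omega>))\<^sup>2) \<longleftrightarrow> integrable M (\<lambda>\<omega>. indicator (space M) \<omega> * (norm (w k \<omega>))\<^sup>2)"
      by (rule Bochner_Integration.integrable_cong) auto
    then show ?thesis using wsq(1)[OF sets.top[of "Fk k"]] by simp
  qed
  have asqi: "integrable M (\<lambda>\<omega>. (norm (a k \<omega>))\<^sup>2)" by (rule a_sq_int[OF Vint])
  have sumi: "integrable M (\<lambda>\<omega>. (norm (a k \<omega>))\<^sup>2 + (norm (w k \<omega>))\<^sup>2)" using asqi wsqi by simp
  define h where "h i \<omega> = (indicator B \<omega> * a k \<omega> $ i) * w k \<omega> $ i" for i \<omega>
  have hint: "integrable M (h i)" for i
  proof (rule Bochner_Integration.integrable_bound[OF sumi])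
    show "h i \<in> borel_measurable M" unfolding h_def[abs_def] by measurable
    show "AE \<omega> in M. norm (h i \<omega>) \<le> norm ((norm (a k \<omega>))\<^sup>2 + (norm (w k \<omega>))\<^sup>2)"
    proof (intro AE_I2)
      fix \<omega>
      have "norm (h i \<omega>) \<le> \<bar>a k \<omega> $ i\<bar> * \<bar>w k \<omega> $ i\<bar>"
        unfolding h_def by (auto simp: indicator_def abs_mult)
      also have "\<dots> \<le> norm (a k \<omega>) * norm (w k \<omega>)"
        by (intro mult_mono component_le_norm_cart) auto
      also have "\<dots> \<le> (norm (a k \<omega>))\<^sup>2 + (norm (w k \<omega>))\<^sup>2" by (rule prod_le_sq) auto
      finally show "norm (h i \<omega>) \<le> norm ((norm (a k \<omega>))\<^sup>2 + (norm (w k \<omega>))\<^sup>2)" by simp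
    qed
  qed
  have hzero: "(\<integral>\<omega>. h i \<omega> \<partial>M) = 0" for i
  proof -
    have fF: "(\<lambda>\<omega>. indicator B \<omega> * a k \<omega> $ i) \<in> borel_measurable (Fk k)"
      using B a_Fk[of k] by measurable
    have gM: "(\<lambda>\<omega>. w k \<omega> $ i) \<in> borel_measurable M" by measurable
    have "(\<integral>\<omega>. h i \<omega> \<partial>M) = (\<integral>\<omega>. (indicator B \<omega> * a k \<omega> $ i) * real_cond_exp M (Fk k) (\<lambda>\<omega>. w k \<omega> $ i) \<omega> \<partial>M)"
      using real_cond_exp_intg(2)[OF hint[unfolded h_def] fF gM] unfolding h_def by simp
    also have "\<dots> = (\<integral>\<omega>. 0 \<partial>M)"
    proof (rule integral_cong_AE)
      show "(\<lambda>\<omega>. (indicator B \<omega> * a k \<omega> $ i) * real_cond_exp M (Fk k) (\<lambda>\<omega>. w k \<omega> $ i) \<omega>) \<in> borel_measurable M"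
        by measurable
      show "AE \<omega> in M. (indicator B \<omega> * a k \<omega> $ i) * real_cond_exp M (Fk k) (\<lambda>\<omega>. w k \<omega> $ i) \<omega> = 0"
        using w_mean[of k i] by eventually_elim simp
    qed simp
    finally show ?thesis by simp
  qed
  have eq: "indicator B \<omega> * inner (a k \<omega>) (w k \<omega>) = (\<Sum>i\<in>UNIV. h i \<omega>)" for \<omega>
    unfolding h_def inner_vec_def by (simp add: sum_distrib_left mult.assoc)
  show "integrable M (\<lambda>\<omega>. indicator B \<omega> * inner (a k \<omega>) (w k \<omega>))"
    unfolding eq using hint by (rule Bochner_Integration.integrable_sum)
  show "(\<integral>\<omega>. indicator B \<omega> * inner (a k \<omega>) (w k \<omega>) \<partial>M) = 0"
    unfolding eq using hint hzero by (simp add: Bochner_Integration.integral_sum)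
qed

end


context SA begin

lemma int_ind_V: "integrable M (V k) \<Longrightarrow> B \<in> sets M \<Longrightarrow> integrable M (\<lambda>\<omega>. indicator B \<omega> * V k \<omega>)"
  using integrable_real_mult_indicator[of B M "V k"] by (simp add: mult.commute)

lemma step_int:
  assumes B: "B \<in> sets (Fk k)" and Vint: "integrable M (V k)"
  shows "integrable M (V (Suc k))"
    and "(\<integral>\<omega>. indicator B \<omega> * V (Suc k) \<omega> \<partial>M) \<le> q k * (\<integral>\<omega>. indicator B \<omega> * V k \<omega> \<partial>M) + (\<gamma> k)\<^sup>2 * \<nu>\<^sup>2 * measure M B"
proof -
  have BM: "B \<in> sets M" using Fk_M[OF B] .
  have pw: "V (Suc k) \<omega> \<le> q k * V k \<omega> - 2 * \<gamma> k * inner (a k \<omega>) (w k \<omega>) + (\<gamma> k)\<^sup>2 * (norm (w k \<omega>))\<^sup>2"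
    if "\<omega> \<in> space M" for \<omega>
    unfolding V_def q_def a_def x_Suc[of k \<omega>]
    by (rule step_ineq[OF X x_X[OF that] sol_VI gpos Lip(2) smono(2)])
  have sp: "space M \<in> sets (Fk k)" using sets.top[of "Fk k"] by simp
  have ci: "integrable M (\<lambda>\<omega>. indicator C \<omega> * inner (a k \<omega>) (w k \<omega>))" if "C \<in> sets (Fk k)" for C
    using cross(1)[OF that Vint] .
  have wi: "integrable M (\<lambda>\<omega>. indicator C \<omega> * (norm (w k \<omega>))\<^sup>2)" if "C \<in> sets (Fk k)" for C
    using wsq(1)[OF that] .
  define R where "R C \<omega> = q k * (indicator C \<omega> * V k \<omega>) - 2 * \<gamma> k * (indicator C \<omega> * inner (a k \<omega>) (w k \<omega>))
      + (\<gamma> k)\<^sup>2 * (indicator C \<omega> * (norm (w k \<omega>))\<^sup>2)" for C \<omega>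
  have Rint: "integrable M (R C)" if "C \<in> sets (Fk k)" for C
    unfolding R_def[abs_def] using int_ind_V[OF Vint Fk_M[OF that]] ci[OF that] wi[OF that] by simp
  have Rle: "indicator C \<omega> * V (Suc k) \<omega> \<le> R C \<omega>" if "\<omega> \<in> space M" for C \<omega>
    using pw[OF that] unfolding R_def by (cases "\<omega> \<in> C") (auto simp: algebra_simps)
  show Vs: "integrable M (V (Suc k))"
  proof (rule Bochner_Integration.integrable_bound[OF Rint[OF sp]])
    show "V (Suc k) \<in> borel_measurable M" by (rule V_M)
    show "AE \<omega> in M. norm (V (Suc k) \<omega>) \<le> norm (R (space M) \<omega>)"
    proof (intro AE_I2)
      fix \<omega> assume o: "\<omega> \<in> space M"
      have "V (Suc k) \<omega> \<le> R (space M) \<omega>" using Rle[OF o, of "space M"] o by simp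
      then show "norm (V (Suc k) \<omega>) \<le> norm (R (space M) \<omega>)" using V_nonneg[of "Suc k" \<omega>] by simp
    qed
  qed
  have "(\<integral>\<omega>. indicator B \<omega> * V (Suc k) \<omega> \<partial>M) \<le> (\<integral>\<omega>. R B \<omega> \<partial>M)"
    by (rule integral_mono[OF int_ind_V[OF Vs BM] Rint[OF B]]) (rule Rle)
  also have "(\<integral>\<omega>. R B \<omega> \<partial>M) = q k * (\<integral>\<omega>. indicator B \<omega> * V k \<omega> \<partial>M)
      - 2 * \<gamma> k * (\<integral>\<omega>. indicator B \<omega> * inner (a k \<omega>) (w k \<omega>) \<partial>M)
      + (\<gamma> k)\<^sup>2 * (\<integral>\<omega>. indicator B \<omega> * (norm (w k \<omega>))\<^sup>2 \<partial>M)"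
    unfolding R_def using int_ind_V[OF Vint BM] ci[OF B] wi[OF B] by simp
  also have "\<dots> \<le> q k * (\<integral>\<omega>. indicator B \<omega> * V k \<omega> \<partial>M) + (\<gamma> k)\<^sup>2 * (\<nu>\<^sup>2 * measure M B)"
    using cross(2)[OF B Vint] wsq(2)[OF B] by (simp add: mult_left_mono)
  finally show "(\<integral>\<omega>. indicator B \<omega> * V (Suc k) \<omega> \<partial>M) \<le> q k * (\<integral>\<omega>. indicator B \<omega> * V k \<omega> \<partial>M) + (\<gamma> k)\<^sup>2 * \<nu>\<^sup>2 * measure M B"
    by (simp add: mult.assoc)
qed

lemma V_int: "integrable M (V k)"
proof (induction k)
  case 0
  have "integrable M (\<lambda>\<omega>. 2 * (norm (x0 \<omega>))\<^sup>2 + 2 * (norm sol)\<^sup>2)" using x0_sq by simp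
  then show ?case
  proof (rule Bochner_Integration.integrable_bound)
    show "V 0 \<in> borel_measurable M" by (rule V_M)
    show "AE \<omega> in M. norm (V 0 \<omega>) \<le> norm (2 * (norm (x0 \<omega>))\<^sup>2 + 2 * (norm sol)\<^sup>2)"
      by (intro AE_I2) (simp add: V_def x_0 norm_diff_sq_le)
  qed
next
  case (Suc k)
  show ?case using step_int(1)[OF sets.top[of "Fk k"] Suc] .
qed

lemma int_V_space: "(\<integral>\<omega>. indicator (space M) \<omega> * V k \<omega> \<partial>M) = (\<integral>\<omega>. V k \<omega> \<partial>M)"
  by (rule Bochner_Integration.integral_cong) auto

lemma int_V_nonneg: "(\<integral>\<omega>. indicator B \<omega> * V k \<omega> \<partial>M) \<ge> 0"
  by (intro integral_nonneg_AE AE_I2) (simp add: V_nonneg)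

definition K where "K = (SOME K. \<forall>k\<ge>K. \<gamma> k * L\<^sup>2 \<le> \<eta> \<and> \<eta> * \<gamma> k \<le> 1)"

lemma K: "k \<ge> K \<Longrightarrow> \<gamma> k * L\<^sup>2 \<le> \<eta> \<and> \<eta> * \<gamma> k \<le> 1"
proof -
  have "\<forall>\<^sub>F k in sequentially. \<gamma> k < min (\<eta> / L\<^sup>2) (1 / \<eta>)"
    using glim Lip(1) smono(1) by (intro order_tendstoD) auto
  then have "\<forall>\<^sub>F k in sequentially. \<gamma> k * L\<^sup>2 \<le> \<eta> \<and> \<eta> * \<gamma> k \<le> 1"
    by eventually_elim (use Lip(1) smono(1) in \<open>auto simp: field_simps\<close>)
  then have "\<exists>K. \<forall>k\<ge>K. \<gamma> k * L\<^sup>2 \<le> \<eta> \<and> \<eta> * \<gamma> k \<le> 1" unfolding eventually_sequentially .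
  then have "\<forall>k\<ge>K. \<gamma> k * L\<^sup>2 \<le> \<eta> \<and> \<eta> * \<gamma> k \<le> 1" unfolding K_def by (rule someI_ex)
  then show "k \<ge> K \<Longrightarrow> \<gamma> k * L\<^sup>2 \<le> \<eta> \<and> \<eta> * \<gamma> k \<le> 1" by blast
qed

lemma qK: "k \<ge> K \<Longrightarrow> q k \<le> 1 - \<eta> * \<gamma> k"
proof -
  assume "k \<ge> K"
  then have h: "\<gamma> k * L\<^sup>2 \<le> \<eta>" using K by blast
  have "\<gamma> k * (\<gamma> k * L\<^sup>2) \<le> \<gamma> k * \<eta>" using h gpos[of k] by (simp add: mult_left_mono)
  then show ?thesis unfolding q_def by (simp add: power2_eq_square algebra_simps)
qed

definition u where "u k = (\<integral>\<omega>. V k \<omega> \<partial>M)"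

lemma u_rec: "k \<ge> K \<Longrightarrow> u (Suc k) \<le> (1 - \<eta> * \<gamma> k) * u k + \<nu>\<^sup>2 * (\<gamma> k)\<^sup>2"
proof -
  assume k: "k \<ge> K"
  have "u (Suc k) \<le> q k * u k + (\<gamma> k)\<^sup>2 * \<nu>\<^sup>2 * measure M (space M)"
    using step_int(2)[OF sets.top[of "Fk k"] V_int[of k]] unfolding u_def by (simp add: int_V_space)
  also have "q k * u k \<le> (1 - \<eta> * \<gamma> k) * u k"
    using qK[OF k] unfolding u_def by (intro mult_right_mono) (auto intro!: integral_nonneg_AE simp: V_nonneg)
  finally show ?thesis by (simp add: prob_space algebra_simps)
qed

lemma u_lim: "u \<longlonglongrightarrow> 0"
  by (rule u_to_zero[OF _ gpos glim gdiv smono(1) _ u_rec])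
     (auto simp: u_def intro!: integral_nonneg_AE simp: V_nonneg)

definition W where "W k \<omega> = V k \<omega> + \<nu>\<^sup>2 * \<gamma> k / c"

lemma W_int: "integrable M (W k)" unfolding W_def[abs_def] using V_int by simp

lemma int_ind_W: "B \<in> sets M \<Longrightarrow> (\<integral>\<omega>. indicator B \<omega> * W k \<omega> \<partial>M) = (\<integral>\<omega>. indicator B \<omega> * V k \<omega> \<partial>M) + \<nu>\<^sup>2 * \<gamma> k / c * measure M B"
proof -
  assume BM: "B \<in> sets M"
  have "(\<integral>\<omega>. indicator B \<omega> * W k \<omega> \<partial>M) = (\<integral>\<omega>. indicator B \<omega> * V k \<omega> + indicator B \<omega> * (\<nu>\<^sup>2 * \<gamma> k / c) \<partial>M)"
    unfolding W_def by (simp add: algebra_simps)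
  also have "\<dots> = (\<integral>\<omega>. indicator B \<omega> * V k \<omega> \<partial>M) + (\<integral>\<omega>. indicator B \<omega> * (\<nu>\<^sup>2 * \<gamma> k / c) \<partial>M)"
    by (rule Bochner_Integration.integral_add[OF int_ind_V[OF V_int BM]])
       (use integrable_real_mult_indicator[OF BM integrable_const[of "\<nu>\<^sup>2 * \<gamma> k / c"]] in \<open>simp add: mult.commute\<close>)
  also have "(\<integral>\<omega>. indicator B \<omega> * (\<nu>\<^sup>2 * \<gamma> k / c) \<partial>M) = \<nu>\<^sup>2 * \<gamma> k / c * measure M B" using BM by simp
  finally show ?thesis .
qed

lemma W_super: "k \<ge> K \<Longrightarrow> B \<in> sets (Fk k) \<Longrightarrow>
   (\<integral>\<omega>. indicator B \<omega> * W (Suc k) \<omega> \<partial>M) \<le> (\<integral>\<omega>. indicator B \<omega> * W k \<omega> \<partial>M)"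
proof -
  assume k: "k \<ge> K" and B: "B \<in> sets (Fk k)"
  have BM: "B \<in> sets M" using Fk_M[OF B] .
  let ?I = "\<lambda>j. (\<integral>\<omega>. indicator B \<omega> * V j \<omega> \<partial>M)"
  have s1: "?I (Suc k) \<le> q k * ?I k + (\<gamma> k)\<^sup>2 * \<nu>\<^sup>2 * measure M B" by (rule step_int(2)[OF B V_int])
  have q1: "q k \<le> 1" using qK[OF k] gpos[of k] smono(1) by (smt (verit) mult_pos_pos)
  have s2: "q k * ?I k \<le> ?I k" using mult_right_mono[OF q1 int_V_nonneg[of B k]] by simp
  have gs: "\<nu>\<^sup>2 * \<gamma> (Suc k) / c = \<nu>\<^sup>2 * \<gamma> k / c - \<nu>\<^sup>2 * (\<gamma> k)\<^sup>2"
    unfolding \<gamma>_Suc using c by (simp add: field_simps power2_eq_square)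
  show ?thesis
    unfolding int_ind_W[OF BM] gs using s1 s2 by (simp add: algebra_simps)
qed

lemma W_Fk: "W k \<in> borel_measurable (Fk k)" unfolding W_def[abs_def] using V_Fk[of k] by measurable

lemma W_nonneg: "W k \<omega> \<ge> 0"
  unfolding W_def using V_nonneg[of k \<omega>] gpos[of k] c by simp

lemma EW_lim: "(\<lambda>n. (\<integral>\<omega>. W n \<omega> \<partial>M)) \<longlonglongrightarrow> 0"
proof -
  have "(\<integral>\<omega>. W n \<omega> \<partial>M) = u n + \<nu>\<^sup>2 * \<gamma> n / c" for n
    unfolding W_def[abs_def] u_def using V_int[of n] by (simp add: prob_space)
  moreover have "(\<lambda>n. u n + \<nu>\<^sup>2 * \<gamma> n / c) \<longlonglongrightarrow> 0 + \<nu>\<^sup>2 * 0 / c"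
    by (intro tendsto_add tendsto_divide tendsto_mult u_lim glim tendsto_const) (use c in auto)
  ultimately show ?thesis by simp
qed

lemma maxW: "n \<ge> K \<Longrightarrow> lv > 0 \<Longrightarrow>
  measure M {\<omega>\<in>space M. \<exists>k\<in>{n..m}. lv \<le> W k \<omega>} \<le> (\<integral>\<omega>. W n \<omega> \<partial>M) / lv"
proof -
  assume n: "n \<ge> K" and lv: "lv > 0"
  show ?thesis
    by (rule maximal_ineq[where M=M and G="\<lambda>k. Fk k" and W=W and n=n and m=m and lv=lv, OF prob_space_axioms lv Fk_sub space_Fk Fk_mono W_Fk W_nonneg W_int])
       (rule W_super, use n in auto)
qed

end


context SA begin

lemma null_N:
  assumes lv: "lv > 0"
  shows "AE \<omega> in M. \<not> (\<forall>n. \<exists>k\<ge>n. lv \<le> V k \<omega>)"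
proof -
  define N where "N = {\<omega>\<in>space M. \<forall>n. \<exists>k\<ge>n. lv \<le> V k \<omega>}"
  have VM[measurable]: "\<And>k. V k \<in> borel_measurable M" by (rule V_M)
  have WM[measurable]: "\<And>k. W k \<in> borel_measurable M" by (rule meas_M[OF W_Fk])
  have NM: "N \<in> sets M" unfolding N_def by measurable
  define Em where "Em n m = {\<omega>\<in>space M. \<exists>k\<in>{n..m}. lv \<le> W k \<omega>}" for n m
  have EmM: "Em n m \<in> sets M" for n m unfolding Em_def by measurable
  have bound: "measure M N \<le> (\<integral>\<omega>. W n \<omega> \<partial>M) / lv" if n: "n \<ge> K" for n
  proof -
    have inc: "incseq (Em n)" unfolding incseq_def Em_def by fastforce
    have lim: "(\<lambda>m. measure M (Em n m)) \<longlonglongrightarrow> measure M (\<Union>m. Em n m)"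
      by (rule finite_Lim_measure_incseq) (use EmM inc in auto)
    have "measure M (\<Union>m. Em n m) \<le> (\<integral>\<omega>. W n \<omega> \<partial>M) / lv"
      by (rule LIMSEQ_le_const2[OF lim]) (use maxW[OF n lv] in \<open>auto simp: Em_def\<close>)
    moreover have "N \<subseteq> (\<Union>m. Em n m)"
    proof
      fix \<omega> assume "\<omega> \<in> N"
      then obtain k where k: "k \<ge> n" "lv \<le> V k \<omega>" "\<omega> \<in> space M" unfolding N_def by blast
      have "lv \<le> W k \<omega>" using k(2) gpos[of k] c w_var(1) unfolding W_def by (smt (verit) divide_pos_pos mult_pos_pos zero_less_power)
      then have "\<omega> \<in> Em n k" unfolding Em_def using k by auto
      then show "\<omega> \<in> (\<Union>m. Em n m)" by blast
    qed
    then have "measure M N \<le> measure M (\<Union>m. Em n m)"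
      by (intro finite_measure_mono) (use EmM in auto)
    ultimately show ?thesis by linarith
  qed
  have "(\<lambda>n. (\<integral>\<omega>. W n \<omega> \<partial>M) / lv) \<longlonglongrightarrow> 0 / lv"
    by (intro tendsto_divide EW_lim tendsto_const) (use lv in auto)
  then have "measure M N \<le> 0 / lv"
    by (rule LIMSEQ_le_const) (use bound in blast)
  then have "measure M N = 0" using measure_nonneg[of M N] by simp
  then have "emeasure M N = 0" by (simp add: emeasure_eq_measure)
  moreover have "(AE \<omega> in M. \<not> (\<forall>n. \<exists>k\<ge>n. lv \<le> V k \<omega>)) \<longleftrightarrow> emeasure M N = 0"
    by (rule AE_iff_measurable[OF NM]) (simp add: N_def)
  ultimately show ?thesis by simp
qed

lemma conv: "AE \<omega> in M. (\<lambda>k. x k \<omega>) \<longlonglongrightarrow> sol"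
proof -
  have "\<forall>j::nat. AE \<omega> in M. \<not> (\<forall>n. \<exists>k\<ge>n. 1 / real (Suc j) \<le> V k \<omega>)"
    by (intro allI null_N) simp
  then have "AE \<omega> in M. \<forall>j::nat. \<not> (\<forall>n. \<exists>k\<ge>n. 1 / real (Suc j) \<le> V k \<omega>)"
    by (simp add: AE_all_countable)
  then show ?thesis
  proof eventually_elim
    case (elim \<omega>)
    show ?case
    proof (rule LIMSEQ_I)
      fix r :: real assume r: "0 < r"
      obtain j where j: "inverse (real (Suc j)) < r\<^sup>2" using reals_Archimedean[of "r\<^sup>2"] r by auto
      have "\<exists>n. \<forall>k\<ge>n. \<not> (1 / real (Suc j) \<le> V k \<omega>)" using elim[rule_format, of j] by blast
      then obtain n where n0: "\<forall>k\<ge>n. \<not> (1 / real (Suc j) \<le> V k \<omega>)" by blast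
      have n: "\<forall>k\<ge>n. V k \<omega> < 1 / real (Suc j)" using n0 not_le by blast
      have "\<forall>k\<ge>n. norm (x k \<omega> - sol) < r"
      proof (intro allI impI)
        fix k assume "k \<ge> n"
        then have "V k \<omega> < 1 / real (Suc j)" using n by blast
        then have "(norm (x k \<omega> - sol))\<^sup>2 < r\<^sup>2" using j unfolding V_def by (simp add: inverse_eq_divide)
        then show "norm (x k \<omega> - sol) < r" by (rule power2_less_imp_less) (use r in simp)
      qed
      then show "\<exists>no. \<forall>k\<ge>no. norm (x k \<omega> - sol) < r" by blast
    qed
  qed
qed

end

theorem proposition2:
  fixes M :: "'a measure" and S :: "'b measure"
    and X :: "(real ^ 'n) set"
    and F :: "real ^ 'n \<Rightarrow> real ^ 'n"
    and \<Phi> :: "real ^ 'n \<Rightarrow> 'b \<Rightarrow> real ^ 'n"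
    and \<xi> :: "'a \<Rightarrow> 'b" and \<xi>s :: "nat \<Rightarrow> 'a \<Rightarrow> 'b"
    and x0 :: "'a \<Rightarrow> real ^ 'n" and x :: "nat \<Rightarrow> 'a \<Rightarrow> real ^ 'n"
    and w :: "nat \<Rightarrow> 'a \<Rightarrow> real ^ 'n"
    and \<gamma> :: "nat \<Rightarrow> real" and L \<eta> \<nu> c :: real
  assumes P: "prob_space M"
    and X: "X \<noteq> {}" "closed X" "convex X"
    and \<Phi>_meas: "(\<lambda>(y, s). \<Phi> y s) \<in> borel_measurable (borel \<Otimes>\<^sub>M S)"
    and \<xi>_meas: "\<xi> \<in> measurable M S"
    and F_def: "\<And>y. y \<in> X \<Longrightarrow> integrable M (\<lambda>\<omega>. \<Phi> y (\<xi> \<omega>))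
                  \<and> F y = (\<integral>\<omega>. \<Phi> y (\<xi> \<omega>) \<partial>M)"
    and Lip: "L > 0" "\<forall>y\<in>X. \<forall>z\<in>X. norm (F y - F z) \<le> L * norm (y - z)"
    and smono: "\<eta> > 0" "\<forall>y\<in>X. \<forall>z\<in>X. inner (F y - F z) (y - z) \<ge> \<eta> * (norm (y - z))\<^sup>2"
    and \<xi>s_meas: "\<And>k. \<xi>s k \<in> measurable M S"
    and x0_meas: "x0 \<in> borel_measurable M"
    and x0_X: "\<And>\<omega>. \<omega> \<in> space M \<Longrightarrow> x0 \<omega> \<in> X"
    and x0_sq: "integrable M (\<lambda>\<omega>. (norm (x0 \<omega>))\<^sup>2)"
    and indep: "prob_space.indep_set M
                {x0 -` A \<inter> space M | A. A \<in> sets borel}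
                {(\<lambda>\<omega> k. \<xi>s k \<omega>) -` B \<inter> space M | B. B \<in> sets (Pi\<^sub>M UNIV (\<lambda>_. S))}"
    and x_0: "\<And>\<omega>. x 0 \<omega> = x0 \<omega>"
    and x_Suc: "\<And>k \<omega>. x (Suc k) \<omega> =
                   closest_point X (x k \<omega> - \<gamma> k *\<^sub>R (F (x k \<omega>) + w k \<omega>))"
    and w_def: "\<And>k \<omega>. w k \<omega> = \<Phi> (x k \<omega>) (\<xi>s k \<omega>) - F (x k \<omega>)"
    and w_mean: "\<And>k i. AE \<omega> in M. real_cond_exp M (nat_filt M S x0 \<xi>s k) (\<lambda>\<omega>. w k \<omega> $ i) \<omega> = 0"
    and w_var: "\<nu> > 0" "\<And>k. AE \<omega> in M.
                 nn_cond_exp M (nat_filt M S x0 \<xi>s k) (\<lambda>\<omega>. ennreal ((norm (w k \<omega>))\<^sup>2)) \<omega> \<le> ennreal (\<nu>\<^sup>2)"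
    and c: "c > 0"
    and \<gamma>0: "0 < \<gamma> 0" "\<gamma> 0 < 1 / c"
    and \<gamma>_Suc: "\<And>k. \<gamma> (Suc k) = \<gamma> k * (1 - c * \<gamma> k)"
  shows "(\<exists>s. VI_sol X F = {s}) \<and>
         (\<exists>xstar. xstar \<in> borel_measurable M \<and>
            (AE \<omega> in M. xstar \<omega> \<in> VI_sol X F \<and> (\<lambda>k. x k \<omega>) \<longlonglongrightarrow> xstar \<omega>))"
proof -
  interpret SA M S X F \<Phi> \<xi>s x0 x w \<gamma> L \<eta> \<nu> c
    by (rule SA.intro[OF P SA_axioms.intro]) (fact assms)+
  have "(\<lambda>_. sol) \<in> borel_measurable M" by simp
  moreover have "AE \<omega> in M. sol \<in> VI_sol X F \<and> (\<lambda>k. x k \<omega>) \<longlonglongrightarrow> sol"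
    using conv sol_VI by simp
  ultimately show ?thesis using sol by blast
qed


end
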